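(* Let $L$ be a distributive lattice and $\mathbf x,\mathbf y\in L^n$. Then $\mathbf x$ and $\mathbf y$ are g-comonotone if and only if $\bigwedge_{i\in I}(x_i\vee y_i)=\bigwedge_{i\in I}x_i\vee\bigwedge_{i\in I}y_i$ for every non-empty subset $I\subseteq\{1,\dots,n\}$. Similarly, $\mathbf x$ and $\mathbf y$ are dually g-comonotone if and only if $\bigvee_{i\in I}(x_i\wedge y_i)=\bigvee_{i\in I}x_i\wedge\bigvee_{i\in I}y_i$ for every non-empty subset $I\subseteq\{1,\dots,n\}$.
   Context: $\mathbf x,\mathbf y\in L^n$ are g-comonotone if for every pair $i,j\in\{1,\dots,n\}$: $(x_i\vee y_i)\wedge(x_j\vee y_j)=(x_i\wedge x_j)\vee(y_i\wedge y_j)$; dually g-comonotone if for every pair $i,j$: $(x_i\wedge y_i)\vee(x_j\wedge y_j)=(x_i\vee x_j)\wedge(y_i\vee y_j)$. *)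

theory Defs
  imports Main
begin

text \<open>Vectors in L^n are represented as functions nat => 'a, indexed by {1..n}.\<close>

definition g_comonotone :: "nat \<Rightarrow> (nat \<Rightarrow> 'a::distrib_lattice) \<Rightarrow> (nat \<Rightarrow> 'a) \<Rightarrow> bool" where
  "g_comonotone n x y \<longleftrightarrow>
     (\<forall>i\<in>{1..n}. \<forall>j\<in>{1..n}.
        inf (sup (x i) (y i)) (sup (x j) (y j)) = sup (inf (x i) (x j)) (inf (y i) (y j)))"

definition dually_g_comonotone :: "nat \<Rightarrow> (nat \<Rightarrow> 'a::distrib_lattice) \<Rightarrow> (nat \<Rightarrow> 'a) \<Rightarrow> bool" where
  "dually_g_comonotone n x y \<longleftrightarrow>
     (\<forall>i\<in>{1..n}. \<forall>j\<in>{1..n}.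
        sup (inf (x i) (y i)) (inf (x j) (y j)) = inf (sup (x i) (x j)) (sup (y i) (y j)))"

end

theory Submission imports Defs begin
lemma l1: fixes a b c d e f :: "'a::distrib_lattice"
 assumes h: "inf (sup c d) (sup e f) \<le> sup (inf c e) (inf d f)"
 shows "inf (sup (inf a c) (inf b d)) (sup (inf a e) (inf b f)) \<le> sup (inf (inf a c) (inf a e)) (inf (inf b d) (inf b f))"
proof -
  let ?R = "sup (inf (inf a c) (inf a e)) (inf (inf b d) (inf b f))"
  have cf: "inf c f \<le> sup (inf c e) (inf d f)" using h
    by (meson inf_mono le_infE order_trans sup.cobounded1 sup.cobounded2 inf_le1 inf_le2)
  have "inf (inf a b) (inf c f) \<le> inf (inf a b) (sup (inf c e) (inf d f))" using cf inf_mono by blast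
  also have "\<dots> = sup (inf (inf a b) (inf c e)) (inf (inf a b) (inf d f))" by (simp add: inf_sup_distrib1)
  also have "\<dots> \<le> ?R" by (simp add: le_supI1 le_supI2 inf.coboundedI1 inf.coboundedI2 le_infI)
  finally have t1: "inf (inf a c) (inf b f) \<le> ?R" by (simp add: inf_aci)
  have de: "inf d e \<le> sup (inf c e) (inf d f)" using h
    by (meson inf_mono le_infE order_trans sup.cobounded1 sup.cobounded2 inf_le1 inf_le2)
  have "inf (inf a b) (inf d e) \<le> inf (inf a b) (sup (inf c e) (inf d f))" using de inf_mono by blast
  also have "\<dots> = sup (inf (inf a b) (inf c e)) (inf (inf a b) (inf d f))" by (simp add: inf_sup_distrib1)
  also have "\<dots> \<le> ?R" by (simp add: le_supI1 le_supI2 inf.coboundedI1 inf.coboundedI2 le_infI)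
  finally have t2: "inf (inf b d) (inf a e) \<le> ?R" by (simp add: inf_aci)
  have "inf (sup (inf a c) (inf b d)) (sup (inf a e) (inf b f)) =
     sup (sup (inf (inf a c) (inf a e)) (inf (inf a c) (inf b f))) (sup (inf (inf b d) (inf a e)) (inf (inf b d) (inf b f)))"
    by (simp add: inf_sup_distrib1 inf_sup_distrib2 sup_aci)
  also have "\<dots> \<le> ?R" using t1 t2 by (simp add: le_supI1 le_supI2)
  finally show ?thesis .
qed
lemma Inf_fin_inf_const: fixes f :: "nat \<Rightarrow> 'a::distrib_lattice"
  assumes "finite J" "J \<noteq> {}"
  shows "Inf_fin ((\<lambda>j. inf c (f j)) ` J) = inf c (Inf_fin (f ` J))"
  using assms
proof (induction J rule: finite_ne_induct)
  case (singleton x) then show ?case by simp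
next
  case (insert k J)
  then show ?case by (simp add: inf_aci)
qed

lemma gen1: fixes x y :: "nat \<Rightarrow> 'a::distrib_lattice"
  assumes "finite J" "J \<noteq> {}"
   "\<forall>i\<in>J. \<forall>j\<in>J. inf (sup (x i) (y i)) (sup (x j) (y j)) \<le> sup (inf (x i) (x j)) (inf (y i) (y j))"
  shows "Inf_fin ((\<lambda>i. sup (x i) (y i)) ` J) \<le> sup (Inf_fin (x ` J)) (Inf_fin (y ` J))"
  using assms
proof (induction J arbitrary: x y rule: finite_ne_induct)
  case (singleton k) then show ?case by simp
next
  case (insert k J)
  define x' where "x' = (\<lambda>j. inf (x k) (x j))"
  define y' where "y' = (\<lambda>j. inf (y k) (y j))"
  let ?A = "Inf_fin ((\<lambda>i. sup (x i) (y i)) ` insert k J)"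
  have hyp': "\<forall>i\<in>J. \<forall>j\<in>J. inf (sup (x' i) (y' i)) (sup (x' j) (y' j)) \<le> sup (inf (x' i) (x' j)) (inf (y' i) (y' j))"
    unfolding x'_def y'_def using insert.prems by (intro ballI l1) auto
  have "?A \<le> Inf_fin ((\<lambda>j. sup (x' j) (y' j)) ` J)"
  proof (rule Inf_fin.boundedI)
    show "finite ((\<lambda>j. sup (x' j) (y' j)) ` J)" using insert by simp
    show "(\<lambda>j. sup (x' j) (y' j)) ` J \<noteq> {}" using insert by simp
    fix a assume "a \<in> (\<lambda>j. sup (x' j) (y' j)) ` J"
    then obtain j where j: "j \<in> J" "a = sup (x' j) (y' j)" by blast
    have "?A \<le> inf (sup (x k) (y k)) (sup (x j) (y j))"
      using insert j by (intro le_infI Inf_fin.coboundedI) auto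
    also have "\<dots> \<le> a" using insert.prems j unfolding x'_def y'_def by auto
    finally show "?A \<le> a" .
  qed
  also have "\<dots> \<le> sup (Inf_fin (x' ` J)) (Inf_fin (y' ` J))" using insert.IH hyp' by blast
  also have "\<dots> = sup (Inf_fin (x ` insert k J)) (Inf_fin (y ` insert k J))"
    unfolding x'_def y'_def using insert by (simp add: Inf_fin_inf_const)
  finally show ?case .
qed

lemma part1: fixes x y :: "nat \<Rightarrow> 'a::distrib_lattice"
  shows "(g_comonotone n x y \<longleftrightarrow>
           (\<forall>I. I \<subseteq> {1..n} \<and> I \<noteq> {} \<longrightarrow>
              Inf_fin ((\<lambda>i. sup (x i) (y i)) ` I) = sup (Inf_fin (x ` I)) (Inf_fin (y ` I))))"
proof
  assume g: "g_comonotone n x y"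
  show "\<forall>I. I \<subseteq> {1..n} \<and> I \<noteq> {} \<longrightarrow>
              Inf_fin ((\<lambda>i. sup (x i) (y i)) ` I) = sup (Inf_fin (x ` I)) (Inf_fin (y ` I))"
  proof (intro allI impI)
    fix I :: "nat set" assume I: "I \<subseteq> {1..n} \<and> I \<noteq> {}"
    have fin: "finite I" using I finite_subset by blast
    have "Inf_fin ((\<lambda>i. sup (x i) (y i)) ` I) \<le> sup (Inf_fin (x ` I)) (Inf_fin (y ` I))"
      using g I fin unfolding g_comonotone_def by (intro gen1) (simp_all, (metis order_refl subsetD)+)
    moreover have "sup (Inf_fin (x ` I)) (Inf_fin (y ` I)) \<le> Inf_fin ((\<lambda>i. sup (x i) (y i)) ` I)"
      using I fin by (intro le_supI Inf_fin.boundedI) (auto intro: le_supI1 le_supI2 Inf_fin.coboundedI)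
    ultimately show "Inf_fin ((\<lambda>i. sup (x i) (y i)) ` I) = sup (Inf_fin (x ` I)) (Inf_fin (y ` I))"
      by (rule antisym)
  qed
next
  assume h: "\<forall>I. I \<subseteq> {1..n} \<and> I \<noteq> {} \<longrightarrow>
              Inf_fin ((\<lambda>i. sup (x i) (y i)) ` I) = sup (Inf_fin (x ` I)) (Inf_fin (y ` I))"
  show "g_comonotone n x y" unfolding g_comonotone_def
  proof (intro ballI)
    fix i j assume "i \<in> {1..n}" "j \<in> {1..n}"
    then have "Inf_fin ((\<lambda>i. sup (x i) (y i)) ` {i,j}) = sup (Inf_fin (x ` {i,j})) (Inf_fin (y ` {i,j}))"
      using h[rule_format, of "{i,j}"] by auto
    then show "inf (sup (x i) (y i)) (sup (x j) (y j)) = sup (inf (x i) (x j)) (inf (y i) (y j))"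
      by (cases "i = j") auto
  qed
qed
lemma l1d: fixes a b c d e f :: "'a::distrib_lattice"
 assumes h: "sup (inf c d) (inf e f) \<ge> inf (sup c e) (sup d f)"
 shows "sup (inf (sup a c) (sup b d)) (inf (sup a e) (sup b f)) \<ge> inf (sup (sup a c) (sup a e)) (sup (sup b d) (sup b f))"
proof -
  let ?R = "inf (sup (sup a c) (sup a e)) (sup (sup b d) (sup b f))"
  have cf: "sup c f \<ge> inf (sup c e) (sup d f)" using h
    by (meson sup_mono le_supE order_trans inf.cobounded1 inf.cobounded2 sup_ge1 sup_ge2)
  have "?R \<le> inf (sup (sup a b) (sup c e)) (sup (sup a b) (sup d f))" by (simp add: le_infI1 le_infI2 sup.coboundedI1 sup.coboundedI2 le_supI)
  also have "\<dots> = sup (sup a b) (inf (sup c e) (sup d f))" by (simp add: sup_inf_distrib1)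
  also have "\<dots> \<le> sup (sup a b) (sup c f)" using cf sup_mono by blast
  finally have t1: "?R \<le> sup (sup a c) (sup b f)" by (simp add: sup_aci)
  have de: "sup d e \<ge> inf (sup c e) (sup d f)" using h
    by (meson sup_mono le_supE order_trans inf.cobounded1 inf.cobounded2 sup_ge1 sup_ge2)
  have "?R \<le> inf (sup (sup a b) (sup c e)) (sup (sup a b) (sup d f))" by (simp add: le_infI1 le_infI2 sup.coboundedI1 sup.coboundedI2 le_supI)
  also have "\<dots> = sup (sup a b) (inf (sup c e) (sup d f))" by (simp add: sup_inf_distrib1)
  also have "\<dots> \<le> sup (sup a b) (sup d e)" using de sup_mono by blast
  finally have t2: "?R \<le> sup (sup b d) (sup a e)" by (simp add: sup_aci)
  have "?R \<le> inf (inf (sup (sup a c) (sup a e)) (sup (sup a c) (sup b f))) (inf (sup (sup b d) (sup a e)) (sup (sup b d) (sup b f)))"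
     using t1 t2 by (simp add: le_infI1 le_infI2)
  also have "\<dots> = sup (inf (sup a c) (sup b d)) (inf (sup a e) (sup b f))"
    by (simp add: sup_inf_distrib1 sup_inf_distrib2 inf_aci)
  finally show ?thesis .
qed
lemma Sup_fin_sup_constd: fixes f :: "nat \<Rightarrow> 'a::distrib_lattice"
  assumes "finite J" "J \<noteq> {}"
  shows "Sup_fin ((\<lambda>j. sup c (f j)) ` J) = sup c (Sup_fin (f ` J))"
  using assms
proof (induction J rule: finite_ne_induct)
  case (singleton x) then show ?case by simp
next
  case (insert k J)
  then show ?case by (simp add: sup_aci)
qed

lemma gen1d: fixes x y :: "nat \<Rightarrow> 'a::distrib_lattice"
  assumes "finite J" "J \<noteq> {}"
   "\<forall>i\<in>J. \<forall>j\<in>J. sup (inf (x i) (y i)) (inf (x j) (y j)) \<ge> inf (sup (x i) (x j)) (sup (y i) (y j))"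
  shows "Sup_fin ((\<lambda>i. inf (x i) (y i)) ` J) \<ge> inf (Sup_fin (x ` J)) (Sup_fin (y ` J))"
  using assms
proof (induction J arbitrary: x y rule: finite_ne_induct)
  case (singleton k) then show ?case by simp
next
  case (insert k J)
  define x' where "x' = (\<lambda>j. sup (x k) (x j))"
  define y' where "y' = (\<lambda>j. sup (y k) (y j))"
  let ?A = "Sup_fin ((\<lambda>i. inf (x i) (y i)) ` insert k J)"
  have hyp': "\<forall>i\<in>J. \<forall>j\<in>J. sup (inf (x' i) (y' i)) (inf (x' j) (y' j)) \<ge> inf (sup (x' i) (x' j)) (sup (y' i) (y' j))"
    unfolding x'_def y'_def using insert.prems by (intro ballI l1d) auto
  have "inf (Sup_fin (x ` insert k J)) (Sup_fin (y ` insert k J)) = inf (Sup_fin (x' ` J)) (Sup_fin (y' ` J))"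
    unfolding x'_def y'_def using insert by (simp add: Sup_fin_sup_constd)
  also have "\<dots> \<le> Sup_fin ((\<lambda>j. inf (x' j) (y' j)) ` J)" using insert.IH hyp' by blast
  also have "\<dots> \<le> ?A"
  proof (rule Sup_fin.boundedI)
    show "finite ((\<lambda>j. inf (x' j) (y' j)) ` J)" using insert by simp
    show "(\<lambda>j. inf (x' j) (y' j)) ` J \<noteq> {}" using insert by simp
    fix a assume "a \<in> (\<lambda>j. inf (x' j) (y' j)) ` J"
    then obtain j where j: "j \<in> J" "a = inf (x' j) (y' j)" by blast
    have "a \<le> sup (inf (x k) (y k)) (inf (x j) (y j))" using insert.prems j unfolding x'_def y'_def by auto
    also have "\<dots> \<le> ?A"
      using insert j by (intro le_supI Sup_fin.coboundedI) auto
    finally show "a \<le> ?A" .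
  qed
  finally show ?case .
qed

lemma part1d: fixes x y :: "nat \<Rightarrow> 'a::distrib_lattice"
  shows "(dually_g_comonotone n x y \<longleftrightarrow>
           (\<forall>I. I \<subseteq> {1..n} \<and> I \<noteq> {} \<longrightarrow>
              Sup_fin ((\<lambda>i. inf (x i) (y i)) ` I) = inf (Sup_fin (x ` I)) (Sup_fin (y ` I))))"
proof
  assume g: "dually_g_comonotone n x y"
  show "\<forall>I. I \<subseteq> {1..n} \<and> I \<noteq> {} \<longrightarrow>
              Sup_fin ((\<lambda>i. inf (x i) (y i)) ` I) = inf (Sup_fin (x ` I)) (Sup_fin (y ` I))"
  proof (intro allI impI)
    fix I :: "nat set" assume I: "I \<subseteq> {1..n} \<and> I \<noteq> {}"
    have fin: "finite I" using I finite_subset by blast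
    have "Sup_fin ((\<lambda>i. inf (x i) (y i)) ` I) \<ge> inf (Sup_fin (x ` I)) (Sup_fin (y ` I))"
      using g I fin unfolding dually_g_comonotone_def by (intro gen1d) (simp_all, (metis order_refl subsetD)+)
    moreover have "inf (Sup_fin (x ` I)) (Sup_fin (y ` I)) \<ge> Sup_fin ((\<lambda>i. inf (x i) (y i)) ` I)"
      using I fin by (intro le_infI Sup_fin.boundedI) (auto intro: le_infI1 le_infI2 Sup_fin.coboundedI)
    ultimately show "Sup_fin ((\<lambda>i. inf (x i) (y i)) ` I) = inf (Sup_fin (x ` I)) (Sup_fin (y ` I))"
      by (simp add: antisym)
  qed
next
  assume h: "\<forall>I. I \<subseteq> {1..n} \<and> I \<noteq> {} \<longrightarrow>
              Sup_fin ((\<lambda>i. inf (x i) (y i)) ` I) = inf (Sup_fin (x ` I)) (Sup_fin (y ` I))"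
  show "dually_g_comonotone n x y" unfolding dually_g_comonotone_def
  proof (intro ballI)
    fix i j assume "i \<in> {1..n}" "j \<in> {1..n}"
    then have "Sup_fin ((\<lambda>i. inf (x i) (y i)) ` {i,j}) = inf (Sup_fin (x ` {i,j})) (Sup_fin (y ` {i,j}))"
      using h[rule_format, of "{i,j}"] by auto
    then show "sup (inf (x i) (y i)) (inf (x j) (y j)) = inf (sup (x i) (x j)) (sup (y i) (y j))"
      by (cases "i = j") auto
  qed
qed

theorem lemma2:
  fixes n :: nat and x y :: "nat \<Rightarrow> 'a::distrib_lattice"
  shows "(g_comonotone n x y \<longleftrightarrow>
           (\<forall>I. I \<subseteq> {1..n} \<and> I \<noteq> {} \<longrightarrow>
              Inf_fin ((\<lambda>i. sup (x i) (y i)) ` I) = sup (Inf_fin (x ` I)) (Inf_fin (y ` I))))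
       \<and> (dually_g_comonotone n x y \<longleftrightarrow>
           (\<forall>I. I \<subseteq> {1..n} \<and> I \<noteq> {} \<longrightarrow>
              Sup_fin ((\<lambda>i. inf (x i) (y i)) ` I) = inf (Sup_fin (x ` I)) (Sup_fin (y ` I))))"
  using part1 part1d by blast

end
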